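(* There exists a sequence $(G_n)_{n\in\mathbb{N}}$ of connected graphs such that $|V(G_n)|=n$ for all $n$, $R_2(G_n)=O(n\log n)$ and $R_3(G_n)=\Omega(n\log^2 n)$.
   Context: For a graph $G$ and integer $r\geqslant 2$, the $r$-colour Ramsey number $R_r(G)$ is the smallest integer $N$ such that every colouring of the edges of the complete graph $K_N$ with $r$ colours contains a copy of $G$ all of whose edges have the same colour. *)

theory Defs
  imports Complex_Main "HOL-Library.Landau_Symbols"
begin

definition simple_graph :: "nat \<Rightarrow> nat set set \<Rightarrow> bool" where
  "simple_graph n E \<longleftrightarrow> (\<forall>e\<in>E. e \<subseteq> {..<n} \<and> card e = 2)"

definition connected_graph :: "nat \<Rightarrow> nat set set \<Rightarrow> bool" where
  "connected_graph n E \<longleftrightarrow>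
     (\<forall>u<n. \<forall>v<n. (u, v) \<in> {(x, y). {x, y} \<in> E}\<^sup>*)"

definition has_mono_copy :: "nat \<Rightarrow> nat \<Rightarrow> (nat set \<Rightarrow> nat) \<Rightarrow> nat \<Rightarrow> nat set set \<Rightarrow> bool" where
  "has_mono_copy r N c n E \<longleftrightarrow>
     (\<exists>i<r. \<exists>f. inj_on f {..<n} \<and> f ` {..<n} \<subseteq> {..<N} \<and> (\<forall>e\<in>E. c (f ` e) = i))"

definition ramsey_number :: "nat \<Rightarrow> nat \<Rightarrow> nat set set \<Rightarrow> nat" where
  "ramsey_number r n E =
     (LEAST N. \<forall>c :: nat set \<Rightarrow> nat.
        (\<forall>e. e \<subseteq> {..<N} \<and> card e = 2 \<longrightarrow> c e < r) \<longrightarrow> has_mono_copy r N c n E)"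

end

theory Submission
  imports Defs "HOL-Library.Ramsey"
begin

lemma ramsey_sets:
  fixes c :: "nat set \<Rightarrow> nat"
  shows "finite S \<Longrightarrow> 2^(s+t) \<le> card S \<Longrightarrow> \<exists>K\<subseteq>S.
     (card K = s \<and> (\<forall>x\<in>K. \<forall>y\<in>K. x\<noteq>y \<longrightarrow> c{x,y} = 0)) \<or>
     (card K = t \<and> (\<forall>x\<in>K. \<forall>y\<in>K. x\<noteq>y \<longrightarrow> c{x,y} \<noteq> 0))"
proof (induction "s+t" arbitrary: s t S)
  case 0
  then show ?case by (intro exI[of _ "{}"]) auto
next
  case (Suc m)
  show ?case
  proof (cases "s = 0 \<or> t = 0")
    case True
    then show ?thesis by (intro exI[of _ "{}"]) auto
  next
    case False
    then have s0: "s > 0" and t0: "t > 0" by auto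
    have "card S > 0" using Suc.prems by (metis not_less order.strict_trans2 zero_less_numeral zero_less_power)
    then obtain v where v: "v \<in> S" by (metis card_gt_0_iff ex_in_conv)
    define R where "R = {w\<in>S-{v}. c{v,w} = 0}"
    define B where "B = {w\<in>S-{v}. c{v,w} \<noteq> 0}"
    have fR: "finite R" and fB: "finite B" using Suc.prems(1) by (auto simp: R_def B_def)
    have "R \<union> B = S - {v}" "R \<inter> B = {}" by (auto simp: R_def B_def)
    then have cRB: "card R + card B = card S - 1"
      using card_Un_disjoint[OF fR fB] v Suc.prems(1) by (metis card_Diff_singleton)
    have pw: "(2::nat)^(s+t) = 2^(s - 1 + t) + 2^(s + (t - 1))"
      using s0 t0 by (cases s; cases t; simp)
    have "2^(s - 1 + t) \<le> card R \<or> 2^(s + (t - 1)) \<le> card B"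
    proof (rule ccontr)
      assume "\<not> ?thesis"
      then have "card R + card B + 2 \<le> 2^(s - 1 + t) + 2^(s + (t - 1))" by auto
      then show False using cRB pw Suc.prems(2) by linarith
    qed
    then show ?thesis
    proof
      assume h: "2^(s - 1 + t) \<le> card R"
      obtain K where K: "K \<subseteq> R" and
        KK: "(card K = s - 1 \<and> (\<forall>x\<in>K. \<forall>y\<in>K. x\<noteq>y \<longrightarrow> c{x,y} = 0)) \<or>
     (card K = t \<and> (\<forall>x\<in>K. \<forall>y\<in>K. x\<noteq>y \<longrightarrow> c{x,y} \<noteq> 0))"
        using Suc.hyps(1)[of "s-1" t R, OF _ fR h] Suc.hyps(2) s0 by (metis Suc_diff_1 add_Suc diff_Suc_1)
      have KS: "K \<subseteq> S" using K by (auto simp: R_def)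
      from KK show ?thesis
      proof
        assume a: "card K = s - 1 \<and> (\<forall>x\<in>K. \<forall>y\<in>K. x\<noteq>y \<longrightarrow> c{x,y} = 0)"
        have vK: "v \<notin> K" using K by (auto simp: R_def)
        have fK: "finite K" using K fR finite_subset by blast
        have "card (insert v K) = s" using a vK fK s0 by simp
        moreover have "\<forall>x\<in>insert v K. \<forall>y\<in>insert v K. x\<noteq>y \<longrightarrow> c{x,y} = 0"
          using a K by (auto simp: R_def insert_commute)
        moreover have "insert v K \<subseteq> S" using KS v by auto
        ultimately show ?thesis by blast
      next
        assume "card K = t \<and> (\<forall>x\<in>K. \<forall>y\<in>K. x\<noteq>y \<longrightarrow> c{x,y} \<noteq> 0)"
        then show ?thesis using KS by blast
      qed
    next
      assume h: "2^(s + (t - 1)) \<le> card B"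
      obtain K where K: "K \<subseteq> B" and
        KK: "(card K = s \<and> (\<forall>x\<in>K. \<forall>y\<in>K. x\<noteq>y \<longrightarrow> c{x,y} = 0)) \<or>
     (card K = t - 1 \<and> (\<forall>x\<in>K. \<forall>y\<in>K. x\<noteq>y \<longrightarrow> c{x,y} \<noteq> 0))"
        using Suc.hyps(1)[of s "t-1" B, OF _ fB h] Suc.hyps(2) t0 by (metis Suc_diff_1 add_Suc_right diff_Suc_1)
      have KS: "K \<subseteq> S" using K by (auto simp: B_def)
      from KK show ?thesis
      proof
        assume a: "card K = t - 1 \<and> (\<forall>x\<in>K. \<forall>y\<in>K. x\<noteq>y \<longrightarrow> c{x,y} \<noteq> 0)"
        have vK: "v \<notin> K" using K by (auto simp: B_def)
        have fK: "finite K" using K fB finite_subset by blast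
        have "card (insert v K) = t" using a vK fK t0 by simp
        moreover have "\<forall>x\<in>insert v K. \<forall>y\<in>insert v K. x\<noteq>y \<longrightarrow> c{x,y} \<noteq> 0"
          using a K by (auto simp: B_def insert_commute)
        moreover have "insert v K \<subseteq> S" using KS v by auto
        ultimately show ?thesis by blast
      next
        assume "card K = s \<and> (\<forall>x\<in>K. \<forall>y\<in>K. x\<noteq>y \<longrightarrow> c{x,y} = 0)"
        then show ?thesis using KS by blast
      qed
    qed
  qed
qed

lemma greedy:
  fixes c :: "nat set \<Rightarrow> nat"
  shows "finite S \<Longrightarrow> k*n \<le> card S \<Longrightarrow> 0 < n \<Longrightarrow>
    (\<forall>v\<in>S. card {w\<in>S. w\<noteq>v \<and> c{v,w}\<noteq>i} < n) \<Longrightarrow>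
    \<exists>K\<subseteq>S. card K = k \<and> (\<forall>x\<in>K. \<forall>y\<in>K. x\<noteq>y \<longrightarrow> c{x,y} = i)"
proof (induction k arbitrary: S)
  case 0
  then show ?case by (intro exI[of _ "{}"]) auto
next
  case (Suc k)
  have "n \<le> card S" using Suc.prems(2) by simp
  then have "card S > 0" using Suc.prems(3) by linarith
  then obtain v where v: "v \<in> S" by (metis card_gt_0_iff ex_in_conv)
  define S' where "S' = {w\<in>S. w\<noteq>v \<and> c{v,w}=i}"
  have fS': "finite S'" using Suc.prems(1) by (auto simp: S'_def)
  have "S \<subseteq> S' \<union> (insert v {w\<in>S. w\<noteq>v \<and> c{v,w}\<noteq>i})" by (auto simp: S'_def)
  then have "card S \<le> card (S' \<union> (insert v {w\<in>S. w\<noteq>v \<and> c{v,w}\<noteq>i}))"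
    by (rule card_mono[rotated]) (use Suc.prems(1) fS' in simp)
  also have "\<dots> \<le> card S' + card (insert v {w\<in>S. w\<noteq>v \<and> c{v,w}\<noteq>i})"
    by (rule card_Un_le)
  also have "card (insert v {w\<in>S. w\<noteq>v \<and> c{v,w}\<noteq>i}) \<le> n"
    using Suc.prems(4) v Suc.prems(1) by (simp add: card_insert_if Suc_leI)
  finally have "k*n \<le> card S'" using Suc.prems(2) by simp
  moreover have "\<forall>u\<in>S'. card {w\<in>S'. w\<noteq>u \<and> c{u,w}\<noteq>i} < n"
  proof
    fix u assume u: "u \<in> S'"
    have "card {w\<in>S'. w\<noteq>u \<and> c{u,w}\<noteq>i} \<le> card {w\<in>S. w\<noteq>u \<and> c{u,w}\<noteq>i}"
      by (rule card_mono) (use Suc.prems(1) in \<open>auto simp: S'_def\<close>)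
    then show "card {w\<in>S'. w\<noteq>u \<and> c{u,w}\<noteq>i} < n" using Suc.prems(4) u by (force simp: S'_def)
  qed
  ultimately obtain K where K: "K \<subseteq> S'" "card K = k" "\<forall>x\<in>K. \<forall>y\<in>K. x\<noteq>y \<longrightarrow> c{x,y} = i"
    using Suc.IH[OF fS'] Suc.prems(3) by blast
  have vK: "v \<notin> K" using K by (auto simp: S'_def)
  have fK: "finite K" using K fS' finite_subset by blast
  have "card (insert v K) = Suc k" using K vK fK by simp
  moreover have "\<forall>x\<in>insert v K. \<forall>y\<in>insert v K. x\<noteq>y \<longrightarrow> c{x,y} = i"
    using K by (auto simp: S'_def insert_commute)
  moreover have "insert v K \<subseteq> S" using K v by (auto simp: S'_def)
  ultimately show ?case by blast
qed


definition kk :: "nat \<Rightarrow> nat" where "kk n = nat \<lfloor>ln (real n) / 2\<rfloor>"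

definition GG :: "nat \<Rightarrow> nat set set" where
  "GG n = {{0,j} | j. 0<j \<and> j<n} \<union> {{a,b} | a b. a<b \<and> b < kk n}"

lemma embed:
  fixes c :: "nat set \<Rightarrow> nat"
  assumes KN: "K \<subseteq> {..<N}" and cK: "card K = kk n"
    and pw: "\<forall>x\<in>K. \<forall>y\<in>K. x\<noteq>y \<longrightarrow> c{x,y}=i" and v: "v\<in>K"
    and deg: "n \<le> card {w\<in>{..<N}. w\<noteq>v \<and> c{v,w}=i}" and ir: "i<r" and kn: "kk n \<le> n"
  shows "has_mono_copy r N c n (GG n)"
proof -
  define k where "k = kk n"
  have fK: "finite K" using KN finite_subset by blast
  define K' where "K' = K - {v}"
  have cK': "card K' = k - 1" using cK v fK by (simp add: K'_def k_def)
  obtain h1 where h1: "bij_betw h1 {0..<k-1} K'"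
    using ex_bij_betw_nat_finite[of K'] fK cK' by (metis K'_def finite_Diff)
  define A where "A = {w\<in>{..<N}. w\<noteq>v \<and> c{v,w}=i}"
  define W where "W = A - K"
  have "card A - card K \<le> card W" unfolding W_def using fK by (rule diff_card_le_card_Diff)
  then have "n - k \<le> card W" using deg cK by (simp add: A_def k_def)
  then obtain W' where W': "W' \<subseteq> W" "card W' = n - k" and fW': "finite W'"
    by (rule obtain_subset_with_card_n)
  obtain h2 where h2: "bij_betw h2 {0..<n-k} W'"
    using ex_bij_betw_nat_finite[OF fW'] W'(2) by (metis atLeast0LessThan)
  define f where "f j = (if j = 0 then v else if j < k then h1 (j-1) else h2 (j-k))" for j
  have fK': "f j \<in> K'" if "0<j" "j<k" for j
    using that h1 by (auto simp: f_def bij_betw_def)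
  have fW: "f j \<in> W'" if "k\<le>j" "j<n" for j
  proof -
    have "k > 0" using v cK fK k_def by (metis card_gt_0_iff empty_iff)
    then show ?thesis using that h2 by (auto simp: f_def bij_betw_def)
  qed
  have vK': "v \<notin> K'" by (simp add: K'_def)
  have K'K: "K' \<subseteq> K" by (auto simp: K'_def)
  have W'K: "W' \<inter> K = {}" using W' by (auto simp: W_def)
  have W'A: "W' \<subseteq> A" using W' by (auto simp: W_def)
  have k0: "k > 0" using v cK fK k_def by (metis card_gt_0_iff empty_iff)
  have inj: "inj_on f {..<n}"
  proof (rule inj_onI)
    fix x y assume x: "x \<in> {..<n}" and y: "y \<in> {..<n}" and e: "f x = f y"
    consider "x = 0" | "0 < x" "x < k" | "k \<le> x" by linarith
    then show "x = y"
    proof cases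
      case 1
      then have "f x = v" by (simp add: f_def)
      then show ?thesis using e fK'[of y] fW[of y] vK' W'K v y 1
        by (cases "y = 0"; cases "y < k") auto
    next
      case 2
      then have fx: "f x \<in> K'" by (rule fK')
      consider "y = 0" | "0 < y" "y < k" | "k \<le> y" by linarith
      then show ?thesis
      proof cases
        case 1 then show ?thesis using e fx vK' by (simp add: f_def)
      next
        case 3 then show ?thesis using e fx fW[of y] y W'K K'K by auto
      next
        case 22: 2
        have "h1 (x-1) = h1 (y-1)" using e 2 22 by (simp add: f_def)
        moreover have "x - 1 \<in> {0..<k-1}" "y - 1 \<in> {0..<k-1}" using 2 22 by auto
        ultimately have "x - 1 = y - 1" using h1 by (auto simp: bij_betw_def inj_on_def)
        then show ?thesis using 2 22 by simp
      qed
    next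
      case 3
      then have fx: "f x \<in> W'" using x by (intro fW) auto
      consider "y = 0" | "0 < y" "y < k" | "k \<le> y" by linarith
      then show ?thesis
      proof cases
        case 1 then show ?thesis using e fx v W'K by (auto simp: f_def)
      next
        case 2 then show ?thesis using e fx fK'[of y] W'K K'K by auto
      next
        case 33: 3
        have "h2 (x-k) = h2 (y-k)" using e 3 33 k0 by (simp add: f_def)
        moreover have "x - k \<in> {0..<n-k}" "y - k \<in> {0..<n-k}" using 3 33 x y by auto
        ultimately have "x - k = y - k" using h2 by (auto simp: bij_betw_def inj_on_def)
        then show ?thesis using 3 33 by simp
      qed
    qed
  qed
  have img: "f ` {..<n} \<subseteq> {..<N}"
  proof
    fix z assume "z \<in> f ` {..<n}"
    then obtain j where j: "j < n" "z = f j" by auto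
    consider "j = 0" | "0 < j" "j < k" | "k \<le> j" by linarith
    then show "z \<in> {..<N}"
    proof cases
      case 1 then show ?thesis using j v KN by (auto simp: f_def)
    next
      case 2 then show ?thesis using j fK'[of j] K'K KN by auto
    next
      case 3 then show ?thesis using j fW[of j] W'A by (auto simp: A_def)
    qed
  qed
  have edges: "\<forall>e\<in>GG n. c (f ` e) = i"
  proof
    fix e assume "e \<in> GG n"
    then consider (a) j where "e = {0,j}" "0<j" "j<n" | (b) a b where "e = {a,b}" "a<b" "b<k"
      unfolding GG_def k_def by blast
    then show "c (f ` e) = i"
    proof cases
      case a
      have f0: "f 0 = v" by (simp add: f_def)
      show ?thesis
      proof (cases "j < k")
        case True
        then have "f j \<in> K'" using a fK' by auto
        then have fj: "f j \<in> K" "f j \<noteq> v" using K'K vK' by auto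
        have "f ` e = {v, f j}" using a f0 by auto
        then show ?thesis using pw v fj by simp
      next
        case False
        then have "f j \<in> W'" using a fW by auto
        then show ?thesis using a f0 W'A by (auto simp: A_def)
      qed
    next
      case b
      have "a < n" "b < n" using b kn k_def by auto
      then have "f a \<noteq> f b" using inj b inj_onD[OF inj, of a b] by auto
      moreover have "f a \<in> K" "f b \<in> K"
        using b fK'[of a] fK'[of b] K'K v by (auto simp: f_def)
      ultimately show ?thesis using b pw by auto
    qed
  qed
  show ?thesis unfolding has_mono_copy_def using ir inj img edges by blast
qed


lemma upper:
  assumes k1: "1 \<le> kk n" and kn: "kk n \<le> n"
  shows "ramsey_number 2 n (GG n) \<le> 4^kk n + 2*kk n*n + 2*n"
proof -
  define k where "k = kk n"
  define N where "N = 4^k + 2*k*n + 2*n"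
  have n0: "0 < n" using k1 kn by linarith
  have main: "has_mono_copy 2 N c n (GG n)"
    if cr: "\<forall>e. e \<subseteq> {..<N} \<and> card e = 2 \<longrightarrow> c e < 2" for c :: "nat set \<Rightarrow> nat"
  proof -
    have col: "c{x,y} < 2" if "x<N" "y<N" "x\<noteq>y" for x y
      using cr that by (auto simp: card_insert_if)
    define D where "D i v = card {w\<in>{..<N}. w\<noteq>v \<and> c{v,w}=i}" for i v
    have degsum: "D 0 v + D 1 v = N - 1" if v: "v < N" for v
    proof -
      have u: "{w\<in>{..<N}. w\<noteq>v \<and> c{v,w}=0} \<union> {w\<in>{..<N}. w\<noteq>v \<and> c{v,w}=1} = {..<N} - {v}"
        using col v by (auto simp: less_2_cases_iff)
      have "D 0 v + D 1 v = card ({w\<in>{..<N}. w\<noteq>v \<and> c{v,w}=0} \<union> {w\<in>{..<N}. w\<noteq>v \<and> c{v,w}=1})"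
        unfolding D_def by (rule card_Un_disjoint[symmetric]) auto
      also have "\<dots> = N - 1" using u v by simp
      finally show ?thesis .
    qed
    define H where "H = {v\<in>{..<N}. n \<le> D 0 v \<and> n \<le> D 1 v}"
    show ?thesis
    proof (cases "4^k \<le> card H")
      case True
      have fH: "finite H" by (simp add: H_def)
      have "(2::nat)^(k+k) = 4^k" by (simp add: power_add power_mult_distrib[symmetric])
      then obtain K where K: "K \<subseteq> H" and
        KK: "(card K = k \<and> (\<forall>x\<in>K. \<forall>y\<in>K. x\<noteq>y \<longrightarrow> c{x,y} = 0)) \<or>
            (card K = k \<and> (\<forall>x\<in>K. \<forall>y\<in>K. x\<noteq>y \<longrightarrow> c{x,y} \<noteq> 0))"
        using ramsey_sets[OF fH, of k k c] True by auto
      have KN: "K \<subseteq> {..<N}" using K by (auto simp: H_def)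
      obtain i where i: "i < 2" "\<forall>x\<in>K. \<forall>y\<in>K. x\<noteq>y \<longrightarrow> c{x,y} = i" and cK: "card K = k"
      proof (cases "\<forall>x\<in>K. \<forall>y\<in>K. x\<noteq>y \<longrightarrow> c{x,y} = 0")
        case True
        then show ?thesis using that[of 0] KK by auto
      next
        case False
        then have a: "card K = k" "\<forall>x\<in>K. \<forall>y\<in>K. x\<noteq>y \<longrightarrow> c{x,y} \<noteq> 0" using KK by auto
        have "\<forall>x\<in>K. \<forall>y\<in>K. x\<noteq>y \<longrightarrow> c{x,y} = 1"
        proof (intro ballI impI)
          fix x y assume "x\<in>K" "y\<in>K" "x\<noteq>y"
          then show "c{x,y} = 1" using a(2) col[of x y] KN by force
        qed
        then show ?thesis using that[of 1] a by auto
      qed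
      have "K \<noteq> {}" using cK k1 k_def by auto
      then obtain v where v: "v \<in> K" by auto
      have "n \<le> D i v" using v K i(1) by (auto simp: H_def less_2_cases_iff)
      then have "n \<le> card {w\<in>{..<N}. w\<noteq>v \<and> c{v,w}=i}" by (simp add: D_def)
      then show ?thesis
        using embed[OF KN _ i(2) v _ i(1) kn] cK k_def by simp
    next
      case False
      define C where "C = {..<N} - H"
      have "card C = N - card H" unfolding C_def
        by (subst card_Diff_subset) (auto simp: H_def)
      then have cC: "2*(k*n) \<le> card C" using False by (simp add: N_def)
      define L where "L i = {v\<in>C. D (1-i) v < n}" for i
      have "C \<subseteq> L 0 \<union> L 1" by (auto simp: L_def C_def H_def)
      then have "card C \<le> card (L 0 \<union> L 1)" by (rule card_mono[rotated]) (auto simp: L_def C_def)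
      also have "\<dots> \<le> card (L 0) + card (L 1)" by (rule card_Un_le)
      finally have "k*n \<le> card (L 0) \<or> k*n \<le> card (L 1)" using cC by linarith
      then obtain i where i: "i < 2" "k*n \<le> card (L i)"
      proof
        assume "k*n \<le> card (L 0)" then show ?thesis using that[of 0] by simp
      next
        assume "k*n \<le> card (L 1)" then show ?thesis using that[of 1] by simp
      qed
      have fL: "finite (L i)" by (simp add: L_def C_def)
      have LN: "L i \<subseteq> {..<N}" by (auto simp: L_def C_def)
      have "\<forall>v\<in>L i. card {w\<in>L i. w\<noteq>v \<and> c{v,w}\<noteq>i} < n"
      proof
        fix v assume v: "v \<in> L i"
        have "{w\<in>L i. w\<noteq>v \<and> c{v,w}\<noteq>i} \<subseteq> {w\<in>{..<N}. w\<noteq>v \<and> c{v,w}=1-i}"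
        proof
          fix w assume w: "w \<in> {w\<in>L i. w\<noteq>v \<and> c{v,w}\<noteq>i}"
          then have "w < N" "v < N" "w \<noteq> v" "c{v,w} \<noteq> i" using LN v by auto
          moreover from this have "c{v,w} < 2" using col by blast
          ultimately show "w \<in> {w\<in>{..<N}. w\<noteq>v \<and> c{v,w}=1-i}" using i(1) by auto
        qed
        then have "card {w\<in>L i. w\<noteq>v \<and> c{v,w}\<noteq>i} \<le> D (1-i) v"
          unfolding D_def by (rule card_mono[rotated]) simp
        then show "card {w\<in>L i. w\<noteq>v \<and> c{v,w}\<noteq>i} < n" using v by (simp add: L_def)
      qed
      then obtain K where K: "K \<subseteq> L i" "card K = k" "\<forall>x\<in>K. \<forall>y\<in>K. x\<noteq>y \<longrightarrow> c{x,y} = i"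
        using greedy[OF fL i(2) n0] by blast
      have "K \<noteq> {}" using K k1 k_def by auto
      then obtain v where v: "v \<in> K" by auto
      have vL: "v \<in> L i" "v < N" using v K LN by auto
      have "D (1-i) v < n" using vL by (simp add: L_def)
      moreover have "D 0 v + D 1 v = N - 1" using degsum vL by simp
      moreover have "2*n \<le> N" by (simp add: N_def)
      ultimately have "n \<le> D i v" using i(1) by (auto simp: less_2_cases_iff)
      then have "n \<le> card {w\<in>{..<N}. w\<noteq>v \<and> c{v,w}=i}" by (simp add: D_def)
      moreover have "K \<subseteq> {..<N}" using K(1) LN by blast
      ultimately show ?thesis
        using embed[OF _ _ K(3) v _ i(1) kn] K(2) k_def by simp
    qed
  qed
  show ?thesis unfolding ramsey_number_def
    by (rule Least_le) (use main in \<open>simp add: N_def k_def\<close>)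
qed


lemma exists3:
  assumes sg: "simple_graph n E"
  shows "\<exists>N. \<forall>c. (\<forall>e. e \<subseteq> {..<N} \<and> card e = 2 \<longrightarrow> c e < 3) \<longrightarrow> has_mono_copy 3 N c n E"
proof -
  obtain N :: nat where N: "partn_lst {..<N} [n,n,n] 2" using ramsey_full[of "[n,n,n]" 2] by blast
  show ?thesis
  proof (intro exI allI impI)
    fix c :: "nat set \<Rightarrow> nat"
    assume cr: "\<forall>e. e \<subseteq> {..<N} \<and> card e = 2 \<longrightarrow> c e < 3"
    have "c \<in> nsets {..<N} 2 \<rightarrow> {..<3}" using cr by (auto simp: nsets_def)
    then obtain i H where i: "i < length [n,n,n]" and H: "H \<in> nsets {..<N} ([n,n,n]!i)"
      and hc: "c ` nsets H 2 \<subseteq> {i}"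
      using partn_lstE[OF N, of c 3] by auto
    have i3: "i < 3" using i by simp
    have "[n,n,n]!i = n" using i3 by (auto simp: nth_Cons split: nat.split)
    then have HN: "H \<subseteq> {..<N}" and fH: "finite H" and cH: "card H = n" using H by (auto simp: nsets_def)
    obtain h where h: "bij_betw h {0..<n} H" using ex_bij_betw_nat_finite[OF fH] cH by metis
    have inj: "inj_on h {..<n}" using h by (simp add: bij_betw_def atLeast0LessThan)
    have img: "h ` {..<n} = H" using h by (simp add: bij_betw_def atLeast0LessThan)
    have "\<forall>e\<in>E. c (h ` e) = i"
    proof
      fix e assume e: "e \<in> E"
      then have es: "e \<subseteq> {..<n}" and ce: "card e = 2" using sg by (auto simp: simple_graph_def)
      have "card (h ` e) = 2" using ce card_image[OF inj_on_subset[OF inj es]] by simp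
      moreover have "h ` e \<subseteq> H" using es img by blast
      ultimately have "h ` e \<in> nsets H 2" using fH by (auto simp: nsets_def intro: finite_subset)
      then show "c (h ` e) = i" using hc by blast
    qed
    then show "has_mono_copy 3 N c n E" unfolding has_mono_copy_def
      using i3 inj img HN by blast
  qed
qed

lemma kk_le: "kk n \<le> n"
proof (cases "n = 0")
  case True then show ?thesis by (simp add: kk_def)
next
  case False
  then have "ln (real n) \<le> real n - 1" by (intro ln_le_minus_one) simp
  then have "ln (real n) / 2 \<le> real n" using False by simp
  then have "\<lfloor>ln (real n) / 2\<rfloor> \<le> int n" by (metis floor_le_iff le_floor_iff floor_of_nat of_int_of_nat_eq floor_mono)
  then show ?thesis by (simp add: kk_def)
qed

lemma GG_edge: "a < kk n \<Longrightarrow> b < kk n \<Longrightarrow> a \<noteq> b \<Longrightarrow> {a,b} \<in> GG n"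
  unfolding GG_def by (cases "a < b") (auto simp: insert_commute, metis insert_commute linorder_neqE_nat)

lemma GG_edge0: "0 < j \<Longrightarrow> j < n \<Longrightarrow> {0,j} \<in> GG n"
  unfolding GG_def by blast

lemma lower_col:
  assumes n2: "2 \<le> n" and k2: "2 \<le> kk n" and NB: "N \<le> (kk n - 1)^2 * (n-1)"
  shows "\<exists>c. (\<forall>e. e \<subseteq> {..<N} \<and> card e = 2 \<longrightarrow> c e < 3) \<and> \<not> has_mono_copy 3 N c n (GG n)"
proof -
  define k where "k = kk n"
  define q where "q = k - 1"
  define m where "m = n - 1"
  have q0: "0 < q" and kq: "k = Suc q" using k2 by (auto simp: q_def k_def)
  have m0: "0 < m" and nm: "n = Suc m" using n2 by (auto simp: m_def)
  define col where "col x y = (if x div m = y div m then 0 else if x div m div q \<noteq> y div m div q then 1 else (2::nat))" for x y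
  define c where "c e = col (Min e) (Max e)" for e
  have colsym: "col x y = col y x" for x y by (auto simp: col_def)
  have cxy: "c {x,y} = col x y" for x y
    by (cases "x \<le> y") (auto simp: c_def max_def min_def colsym)
  have c3: "c e < 3" for e by (simp add: c_def col_def)
  have nomono: False if i: "i < 3" and inj: "inj_on f {..<n}" and img: "f ` {..<n} \<subseteq> {..<N}"
    and ed: "\<forall>e\<in>GG n. c (f ` e) = i" for i f
  proof -
    have fN: "f j < q*q*m" if "j < n" for j
    proof -
      have "f j < N" using img that by auto
      also have "N \<le> q*q*m" using NB by (simp add: q_def k_def m_def power2_eq_square)
      finally show ?thesis .
    qed
    have ek: "col (f a) (f b) = i" if "a < k" "b < k" "a \<noteq> b" for a b
    proof -
      have "{a,b} \<in> GG n" using GG_edge that k_def by blast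
      then have "c (f ` {a,b}) = i" using ed by blast
      then show ?thesis by (simp add: cxy)
    qed
    have kn: "k \<le> n" using kk_le k_def by simp
    consider "i = 0" | "i = 1" | "i = 2" using i by linarith
    then show False
    proof cases
      case 1
      define b where "b = f 0 div m"
      have blk0: "f j div m = b" if "j < n" for j
      proof (cases "j = 0")
        case True then show ?thesis by (simp add: b_def)
      next
        case False
        then have "{0,j} \<in> GG n" using GG_edge0 that by simp
        then have "c (f ` {0,j}) = 0" using ed 1 by blast
        then have "col (f 0) (f j) = 0" by (simp add: cxy)
        then show ?thesis by (simp add: col_def b_def split: if_splits)
      qed
      have "f ` {..<n} \<subseteq> {b*m..<b*m+m}"
      proof
        fix z assume "z \<in> f ` {..<n}"
        then obtain j where j: "j < n" "z = f j" by auto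
        with blk0 have d: "f j div m = b" by simp
        have "f j = b * m + f j mod m" using d div_mult_mod_eq[of "f j" m] by simp
        moreover have "f j mod m < m" using m0 by simp
        ultimately show "z \<in> {b*m..<b*m+m}" using j by simp
      qed
      then have "card (f ` {..<n}) \<le> card {b*m..<b*m+m}" by (rule card_mono[rotated]) simp
      moreover have "card (f ` {..<n}) = n" using card_image[OF inj] by simp
      ultimately show False using nm by simp
    next
      case 2
      define g where "g j = f j div m div q" for j
      have "inj_on g {..<k}"
      proof (rule inj_onI)
        fix a b assume a: "a \<in> {..<k}" and b: "b \<in> {..<k}" and e: "g a = g b"
        show "a = b"
        proof (rule ccontr)
          assume "a \<noteq> b"
          then have "col (f a) (f b) = 1" using ek a b 2 by auto
          then show False using e by (simp add: g_def col_def split: if_splits)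
        qed
      qed
      moreover have "g ` {..<k} \<subseteq> {..<q}"
      proof
        fix z assume "z \<in> g ` {..<k}"
        then obtain j where j: "j < k" "z = g j" by auto
        have "f j < q*q*m" using fN j kn by simp
        then have "f j div m < q*q" by (rule less_mult_imp_div_less)
        then have "f j div m div q < q" by (rule less_mult_imp_div_less)
        then show "z \<in> {..<q}" using j by (simp add: g_def)
      qed
      ultimately have "card {..<k} \<le> card {..<q}" by (intro card_inj_on_le) auto
      then show False using kq by simp
    next
      case 3
      define g where "g j = f j div m mod q" for j
      have "inj_on g {..<k}"
      proof (rule inj_onI)
        fix a b assume a: "a \<in> {..<k}" and b: "b \<in> {..<k}" and e: "g a = g b"
        show "a = b"
        proof (rule ccontr)
          assume "a \<noteq> b"
          then have cc: "col (f a) (f b) = 2" using ek a b 3 by auto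
          then have d1: "f a div m \<noteq> f b div m" and d2: "f a div m div q = f b div m div q"
            by (simp_all add: col_def split: if_splits)
          have "f a div m = f a div m div q * q + f a div m mod q" by simp
          moreover have "f b div m = f b div m div q * q + f b div m mod q" by simp
          ultimately have "f a div m = f b div m" using d2 e by (simp add: g_def)
          then show False using d1 by simp
        qed
      qed
      moreover have "g ` {..<k} \<subseteq> {..<q}" using q0 by (auto simp: g_def)
      ultimately have "card {..<k} \<le> card {..<q}" by (intro card_inj_on_le) auto
      then show False using kq by simp
    qed
  qed
  show ?thesis
  proof (intro exI conjI)
    show "\<forall>e. e \<subseteq> {..<N} \<and> card e = 2 \<longrightarrow> c e < 3" using c3 by simp
    show "\<not> has_mono_copy 3 N c n (GG n)"
      unfolding has_mono_copy_def using nomono by blast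
  qed
qed

lemma simple_GG: "simple_graph n (GG n)"
  unfolding simple_graph_def GG_def using kk_le[of n] by auto

lemma lower:
  assumes n2: "2 \<le> n" and k2: "2 \<le> kk n"
  shows "(kk n - 1)^2 * (n-1) < ramsey_number 3 n (GG n)"
proof -
  define P where "P N = (\<forall>c :: nat set \<Rightarrow> nat.
        (\<forall>e. e \<subseteq> {..<N} \<and> card e = 2 \<longrightarrow> c e < 3) \<longrightarrow> has_mono_copy 3 N c n (GG n))" for N
  have ex: "\<exists>N. P N" using exists3[OF simple_GG] unfolding P_def .
  have PR: "P (Least P)" using ex by (rule LeastI_ex)
  have R: "ramsey_number 3 n (GG n) = Least P" unfolding ramsey_number_def P_def by simp
  show ?thesis
  proof (rule ccontr)
    assume "\<not> ?thesis"
    then have "Least P \<le> (kk n - 1)^2 * (n-1)" using R by simp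
    then obtain c where "(\<forall>e. e \<subseteq> {..<Least P} \<and> card e = 2 \<longrightarrow> c e < 3)"
      "\<not> has_mono_copy 3 (Least P) c n (GG n)" using lower_col[OF n2 k2] by blast
    then show False using PR unfolding P_def by blast
  qed
qed


lemma kk_bounds:
  assumes "1 \<le> n"
  shows "real (kk n) \<le> ln (real n) / 2" "ln (real n) / 2 - 1 \<le> real (kk n)"
proof -
  have l0: "0 \<le> ln (real n) / 2" using assms by simp
  then have "0 \<le> \<lfloor>ln (real n) / 2\<rfloor>" by simp
  then have eq: "real (kk n) = real_of_int \<lfloor>ln (real n) / 2\<rfloor>" by (simp add: kk_def)
  show "real (kk n) \<le> ln (real n) / 2" unfolding eq by (rule of_int_floor_le)
  show "ln (real n) / 2 - 1 \<le> real (kk n)" unfolding eq by linarith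
qed

lemma four_pow_le:
  assumes "1 \<le> n"
  shows "real (4 ^ kk n) \<le> real n"
proof -
  have e1: "2 \<le> exp (1::real)" using exp_ge_add_one_self[of 1] by simp
  have "(4::real) \<le> exp 1 * exp 1" using mult_mono[OF e1 e1] by simp
  also have "\<dots> = exp 2" by (simp add: exp_add[symmetric])
  finally have e2: "(4::real) \<le> exp 2" .
  have "real (4 ^ kk n) = 4 ^ kk n" by simp
  also have "\<dots> \<le> exp 2 ^ kk n" by (rule power_mono[OF e2]) simp
  also have "\<dots> = exp (real (kk n) * 2)" by (simp add: exp_of_nat_mult)
  also have "\<dots> \<le> exp (ln (real n))" using kk_bounds(1)[OF assms] by simp
  also have "\<dots> = real n" using assms by simp
  finally show ?thesis .
qed

theorem main_asym:
  shows "(\<lambda>n. real (ramsey_number 2 n (GG n))) \<in> O(\<lambda>n. real n * ln (real n))"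
    and "(\<lambda>n. real (ramsey_number 3 n (GG n))) \<in> \<Omega>(\<lambda>n. real n * (ln (real n))^2)"
proof -
  have ev: "eventually (\<lambda>n::nat. exp 8 \<le> real n) at_top"
    using eventually_ge_at_top[of "nat \<lceil>exp (8::real)\<rceil>"]
    by (rule eventually_mono) (meson of_nat_le_iff order.trans real_nat_ceiling_ge)
  have facts: "8 \<le> ln (real n) \<and> 2 \<le> n \<and> 1 \<le> n \<and> 2 \<le> kk n" if "exp 8 \<le> real n" for n :: nat
  proof -
    have "(9::real) \<le> exp 8" using exp_ge_add_one_self[of 8] by simp
    then have n9: "9 \<le> real n" using that by linarith
    have "ln (exp 8) \<le> ln (real n)" using that n9 by (subst ln_le_cancel_iff) auto
    then have L: "8 \<le> ln (real n)" by simp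
    have "ln (real n) / 2 - 1 \<le> real (kk n)" using kk_bounds(2)[of n] n9 by simp
    then have "2 \<le> kk n" using L by linarith
    then show ?thesis using L n9 by auto
  qed
  show "(\<lambda>n. real (ramsey_number 2 n (GG n))) \<in> O(\<lambda>n. real n * ln (real n))"
  proof (rule bigoI[where c = 4])
    show "eventually (\<lambda>n. norm (real (ramsey_number 2 n (GG n))) \<le> 4 * norm (real n * ln (real n))) at_top"
      using ev
    proof (rule eventually_mono)
      fix n :: nat assume "exp 8 \<le> real n"
      then have f: "8 \<le> ln (real n)" "2 \<le> n" "1 \<le> n" "2 \<le> kk n" using facts by auto
      have "ramsey_number 2 n (GG n) \<le> 4^kk n + 2*kk n*n + 2*n"
        using upper[of n] f kk_le[of n] by simp
      then have "real (ramsey_number 2 n (GG n)) \<le> real (4^kk n) + 2 * real (kk n) * real n + 2 * real n"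
        by (metis (mono_tags, opaque_lifting) of_nat_add of_nat_le_iff of_nat_mult of_nat_numeral)
      also have "\<dots> \<le> real n + ln (real n) * real n + 2 * real n"
      proof -
        have p: "real (4^kk n) \<le> real n" by (rule four_pow_le[OF f(3)])
        have p2: "2 * real (kk n) * real n \<le> ln (real n) * real n"
          using kk_bounds(1)[OF f(3)] by (intro mult_right_mono) auto
        show ?thesis using p p2 by linarith
      qed
      also have "\<dots> \<le> 4 * (real n * ln (real n))"
        using f(1) mult_left_mono[of 1 "ln (real n)" "real n"] by (simp add: algebra_simps)
      finally show "norm (real (ramsey_number 2 n (GG n))) \<le> 4 * norm (real n * ln (real n))"
        using f(1) by simp
    qed
  qed
  show "(\<lambda>n. real (ramsey_number 3 n (GG n))) \<in> \<Omega>(\<lambda>n. real n * (ln (real n))^2)"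
  proof (rule landau_omega.bigI[where c = "1/32"])
    show "(0::real) < 1/32" by simp
    show "eventually (\<lambda>n. norm (real (ramsey_number 3 n (GG n))) \<ge> 1/32 * norm (real n * (ln (real n))^2)) at_top"
      using ev
    proof (rule eventually_mono)
      fix n :: nat assume "exp 8 \<le> real n"
      then have f: "8 \<le> ln (real n)" "2 \<le> n" "1 \<le> n" "2 \<le> kk n" using facts by auto
      define L where "L = ln (real n)"
      have lo: "(kk n - 1)^2 * (n-1) < ramsey_number 3 n (GG n)" using lower f by simp
      have q: "real (kk n - 1) = real (kk n) - 1" using f by (simp add: of_nat_diff)
      have qL: "L / 4 \<le> real (kk n - 1)" using q kk_bounds(2)[OF f(3)] f(1) by (simp add: L_def)
      have m: "real (n - 1) = real n - 1" using f by (simp add: of_nat_diff)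
      have mn: "real n / 2 \<le> real (n - 1)" using m f(2) by simp
      have "(L/4)^2 \<le> real (kk n - 1) ^ 2" using qL f(1) by (intro power_mono) (auto simp: L_def)
      then have "(L/4)^2 * (real n / 2) \<le> real (kk n - 1) ^ 2 * real (n - 1)"
        using mn by (intro mult_mono) auto
      also have "\<dots> = real ((kk n - 1)^2 * (n-1))" by simp
      also have "\<dots> \<le> real (ramsey_number 3 n (GG n))" by (intro of_nat_mono less_imp_le lo)
      finally have "(L/4)^2 * (real n / 2) \<le> real (ramsey_number 3 n (GG n))" .
      moreover have "(L/4)^2 * (real n / 2) = 1/32 * (real n * L^2)" by (simp add: power2_eq_square)
      ultimately have r: "1/32 * (real n * L^2) \<le> real (ramsey_number 3 n (GG n))" by linarith
      have n1: "norm (real n * (ln (real n))^2) = real n * L^2" by (simp add: L_def)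
      have n2: "norm (real (ramsey_number 3 n (GG n))) = real (ramsey_number 3 n (GG n))" by simp
      show "norm (real (ramsey_number 3 n (GG n))) \<ge> 1/32 * norm (real n * (ln (real n))^2)"
        unfolding n1 n2 using r .
    qed
  qed
qed


lemma connected_GG: "connected_graph n (GG n)"
  unfolding connected_graph_def
proof (intro allI impI)
  fix u v assume u: "u < n" and v: "v < n"
  have to0: "(x, 0) \<in> {(x, y). {x, y} \<in> GG n}\<^sup>*" if "x < n" for x
  proof (cases "x = 0")
    case True then show ?thesis by simp
  next
    case False
    then have "{0, x} \<in> GG n" using GG_edge0 that by simp
    then have "{x, 0} \<in> GG n" by (simp add: insert_commute)
    then show ?thesis by (intro r_into_rtrancl) simp
  qed
  have from0: "(0, x) \<in> {(x, y). {x, y} \<in> GG n}\<^sup>*" if "x < n" for x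
  proof (cases "x = 0")
    case True then show ?thesis by simp
  next
    case False
    then have "{0, x} \<in> GG n" using GG_edge0 that by simp
    then show ?thesis by (intro r_into_rtrancl) simp
  qed
  show "(u, v) \<in> {(x, y). {x, y} \<in> GG n}\<^sup>*"
    using rtrancl_trans[OF to0[OF u] from0[OF v]] .
qed

theorem theorem1p4:
  shows "\<exists>G :: nat \<Rightarrow> nat set set.
    (\<forall>n. simple_graph n (G n) \<and> connected_graph n (G n)) \<and>
    (\<lambda>n. real (ramsey_number 2 n (G n))) \<in> O(\<lambda>n. real n * ln (real n)) \<and>
    (\<lambda>n. real (ramsey_number 3 n (G n))) \<in> \<Omega>(\<lambda>n. real n * (ln (real n))^2)"
  using simple_GG connected_GG main_asym by blast

end
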